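(* Let $P$ be a set of $n$ points in the plane in convex position, and let $S\subseteq P$ be a dominating set of the unit-disk graph $G(P)$. Then there exist a partition $\mathcal{A}$ of $P$ (into consecutive, nonempty, pairwise disjoint sublists) and a line-separable assignment $\phi:\mathcal{A}\rightarrow S$ such that for every center $p\in S$ we have $p\in G_p$, i.e., one of the sublists assigned to $p$ contains $p$.
   Context: $P$ is in convex position (every point of $P$ is a vertex of its convex hull), no three points of $P$ are collinear and no four lie on a common circle. $P$ is viewed as the cyclic list $\langle p_1,\dots,p_n\rangle$ ordered counterclockwise along the convex hull. A sublist is a contiguous subsequence of this cyclic list; sublists are consecutive if their concatenation is again a sublist. For a point $p$, $D_p$ is the closed disk of radius $1$ centered at $p$. The unit-disk graph $G(P)$ has vertex set $P$ and an edge between two points iff their Euclidean distance is at most $1$. A dominating set is a set $S\subseteq P$ such that every point of $P$ is in $S$ or adjacent to a point of $S$; points of $S$ are called centers. A partition $\mathcal{A}$ of $P$ is a partition of the cyclic list into consecutive, nonempty, pairwise disjoint sublists. An assignment $\phi:\mathcal{A}\to S$ maps each sublist $\alpha\in\mathcal{A}$ to exactly one center $p\in S$ with $\alpha\subseteq D_p$. The group $G_p$ of a center $p$ is the set of points in the sublists assigned to $p$. The assignment is line separable if for every two distinct centers $p,q$ there is a line $\ell$ such that the points of one of $G_p,G_q$ lie on one side of $\ell$ or on $\ell$, and the points of the other lie strictly on the other side of $\ell$. *)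

theory Defs
  imports "HOL-Analysis.Analysis"
begin

type_synonym point = "real^2"

text \<open>Orientation determinant of the triple (a, b, c); positive iff counterclockwise.\<close>
definition orient :: "point \<Rightarrow> point \<Rightarrow> point \<Rightarrow> real" where
  "orient a b c = (b$1 - a$1) * (c$2 - a$2) - (b$2 - a$2) * (c$1 - a$1)"

definition convex_position :: "point set \<Rightarrow> bool" where
  "convex_position P \<longleftrightarrow> (\<forall>p\<in>P. p \<notin> convex hull (P - {p}))"

definition no_three_collinear :: "point set \<Rightarrow> bool" where
  "no_three_collinear P \<longleftrightarrow>
     (\<forall>a\<in>P. \<forall>b\<in>P. \<forall>c\<in>P. a \<noteq> b \<and> a \<noteq> c \<and> b \<noteq> c \<longrightarrow> \<not> collinear {a, b, c})"

definition no_four_cocircular :: "point set \<Rightarrow> bool" where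
  "no_four_cocircular P \<longleftrightarrow>
     \<not> (\<exists>Q \<subseteq> P. card Q = 4 \<and> (\<exists>c r. \<forall>q\<in>Q. dist q c = r))"

text \<open>The list ps enumerates the points counterclockwise along the convex hull:
  every triple taken in list order is a counterclockwise (left) turn.\<close>
definition ccw_hull_order :: "point list \<Rightarrow> bool" where
  "ccw_hull_order ps \<longleftrightarrow>
     (\<forall>i j k. i < j \<and> j < k \<and> k < length ps \<longrightarrow> orient (ps!i) (ps!j) (ps!k) > 0)"

text \<open>Sublists (contiguous pieces) of the cyclic list ps, represented by their point sets.\<close>
definition cyc_sublist :: "point list \<Rightarrow> nat \<Rightarrow> nat \<Rightarrow> point set" where
  "cyc_sublist ps s l = {ps ! ((s + t) mod length ps) | t. t < l}"

definition is_sublist :: "point list \<Rightarrow> point set \<Rightarrow> bool" where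
  "is_sublist ps \<alpha> \<longleftrightarrow> (\<exists>s l. s < length ps \<and> 1 \<le> l \<and> l \<le> length ps \<and> \<alpha> = cyc_sublist ps s l)"

definition is_partition :: "point list \<Rightarrow> point set set \<Rightarrow> bool" where
  "is_partition ps A \<longleftrightarrow>
     (\<forall>\<alpha>\<in>A. is_sublist ps \<alpha> \<and> \<alpha> \<noteq> {}) \<and>
     (\<forall>\<alpha>\<in>A. \<forall>\<beta>\<in>A. \<alpha> \<noteq> \<beta> \<longrightarrow> \<alpha> \<inter> \<beta> = {}) \<and>
     \<Union>A = set ps"

definition unit_disk :: "point \<Rightarrow> point set" where
  "unit_disk p = cball p 1"

definition dominating_set :: "point set \<Rightarrow> point set \<Rightarrow> bool" where
  "dominating_set P S \<longleftrightarrow> S \<subseteq> P \<and>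
     (\<forall>x\<in>P. x \<in> S \<or> (\<exists>s\<in>S. x \<noteq> s \<and> dist x s \<le> 1))"

definition is_assignment :: "point set set \<Rightarrow> point set \<Rightarrow> (point set \<Rightarrow> point) \<Rightarrow> bool" where
  "is_assignment A S \<phi> \<longleftrightarrow> (\<forall>\<alpha>\<in>A. \<phi> \<alpha> \<in> S \<and> \<alpha> \<subseteq> unit_disk (\<phi> \<alpha>))"

definition center_group :: "point set set \<Rightarrow> (point set \<Rightarrow> point) \<Rightarrow> point \<Rightarrow> point set" where
  "center_group A \<phi> p = \<Union>{\<alpha>\<in>A. \<phi> \<alpha> = p}"

definition line_sep :: "point set \<Rightarrow> point set \<Rightarrow> bool" where
  "line_sep X Y \<longleftrightarrow> (\<exists>a b. a \<noteq> 0 \<and> (\<forall>x\<in>X. a \<bullet> x \<le> b) \<and> (\<forall>y\<in>Y. a \<bullet> y > b))"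

definition line_separable :: "point set set \<Rightarrow> point set \<Rightarrow> (point set \<Rightarrow> point) \<Rightarrow> bool" where
  "line_separable A S \<phi> \<longleftrightarrow>
     (\<forall>p\<in>S. \<forall>q\<in>S. p \<noteq> q \<longrightarrow>
        line_sep (center_group A \<phi> p) (center_group A \<phi> q) \<or> line_sep (center_group A \<phi> q) (center_group A \<phi> p))"

end

theory Submission
  imports Defs
begin

definition rk :: "point list \<Rightarrow> point \<Rightarrow> nat" where
  "rk ps s = (LEAST i. ps ! i = s)"

lemma rk_nth: "s \<in> set ps \<Longrightarrow> ps ! (rk ps s) = s"
  unfolding rk_def by (metis (mono_tags, lifting) LeastI in_set_conv_nth)

lemma rk_inj: "p \<in> set ps \<Longrightarrow> q \<in> set ps \<Longrightarrow> rk ps p = rk ps q \<Longrightarrow> p = q"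
  by (metis rk_nth)

definition ctr :: "point list \<Rightarrow> point set \<Rightarrow> point \<Rightarrow> point" where
  "ctr ps S x = (SOME s. s \<in> S \<and> (\<forall>t\<in>S. dist x s < dist x t \<or> (dist x s = dist x t \<and> rk ps s \<le> rk ps t)))"

lemma ctr_ex:
  assumes "finite S" "S \<noteq> {}"
  shows "\<exists>s. s \<in> S \<and> (\<forall>t\<in>S. dist x s < dist x t \<or> (dist x s = dist x t \<and> rk ps s \<le> rk ps t))"
proof -
  define m where "m = Min (dist x ` S)"
  define N where "N = {s\<in>S. dist x s = m}"
  have mS: "m \<in> dist x ` S" using assms unfolding m_def by simp
  have mle: "\<forall>t\<in>S. m \<le> dist x t" using assms unfolding m_def by simp
  have Nne: "N \<noteq> {}" "finite N" using mS assms(1) unfolding N_def by auto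
  have "Min (rk ps ` N) \<in> rk ps ` N" using Nne by simp
  then obtain s where s: "s \<in> N" "rk ps s = Min (rk ps ` N)" by auto
  have "\<forall>t\<in>N. rk ps s \<le> rk ps t" using s Nne by simp
  moreover have "dist x s = m" "s \<in> S" using s unfolding N_def by auto
  moreover have "t \<in> S \<Longrightarrow> dist x t = m \<Longrightarrow> t \<in> N" for t unfolding N_def by auto
  ultimately show ?thesis using mle by (metis order_le_less)
qed

lemma ctr_prop:
  assumes "finite S" "S \<noteq> {}"
  shows "ctr ps S x \<in> S \<and> (\<forall>t\<in>S. dist x (ctr ps S x) < dist x t \<or> (dist x (ctr ps S x) = dist x t \<and> rk ps (ctr ps S x) \<le> rk ps t))"
  unfolding ctr_def using someI_ex[OF ctr_ex[OF assms]] by blast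

lemma ctr_le:
  assumes "finite S" "S \<noteq> {}" "t \<in> S"
  shows "dist x (ctr ps S x) \<le> dist x t"
  using ctr_prop[OF assms(1,2), of ps x] assms(3) by auto

lemma ctr_lt:
  assumes "finite S" "S \<noteq> {}" "t \<in> S" "rk ps t < rk ps (ctr ps S x)"
  shows "dist x (ctr ps S x) < dist x t"
  using ctr_prop[OF assms(1,2), of ps x] assms(3,4) by auto

lemma ctr_self:
  assumes "finite S" "S \<noteq> {}" "p \<in> S"
  shows "ctr ps S p = p"
  using ctr_le[OF assms, of p] by simp

lemma dist_le_iff:
  fixes x p q :: point
  shows "dist x p \<le> dist x q \<longleftrightarrow> (q - p) \<bullet> x \<le> (q \<bullet> q - p \<bullet> p) / 2"
proof -
  have "dist x p \<le> dist x q \<longleftrightarrow> dist x p ^ 2 \<le> dist x q ^ 2"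
    by (simp add: power_mono_iff)
  also have "\<dots> \<longleftrightarrow> (x - p) \<bullet> (x - p) \<le> (x - q) \<bullet> (x - q)"
    by (simp add: dist_norm power2_norm_eq_inner)
  also have "\<dots> \<longleftrightarrow> (q - p) \<bullet> x \<le> (q \<bullet> q - p \<bullet> p) / 2"
  proof -
    have e1: "(x - p) \<bullet> (x - p) = x \<bullet> x - 2 * (p \<bullet> x) + p \<bullet> p"
      by (simp add: inner_diff_left inner_diff_right inner_commute[of x p])
    have e2: "(x - q) \<bullet> (x - q) = x \<bullet> x - 2 * (q \<bullet> x) + q \<bullet> q"
      by (simp add: inner_diff_left inner_diff_right inner_commute[of x q])
    have e3: "(q - p) \<bullet> x = q \<bullet> x - p \<bullet> x" by (simp add: inner_diff_left)
    show ?thesis unfolding e1 e2 e3 by (simp add: field_simps)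
  qed
  finally show ?thesis .
qed

theorem lemma1:
  fixes ps :: "point list" and S :: "point set"
  assumes "distinct ps"
    and "convex_position (set ps)"
    and "no_three_collinear (set ps)"
    and "no_four_cocircular (set ps)"
    and "ccw_hull_order ps"
    and "dominating_set (set ps) S"
  shows "\<exists>A \<phi>. is_partition ps A \<and> is_assignment A S \<phi> \<and> line_separable A S \<phi> \<and>
           (\<forall>p\<in>S. p \<in> center_group A \<phi> p)"
proof (cases "S = {}")
  case True
  then have "set ps = {}" using assms(6) unfolding dominating_set_def by auto
  then show ?thesis using True
    by (intro exI[of _ "{}"]) (auto simp: is_partition_def is_assignment_def line_separable_def)
next
  case False
  have SP: "S \<subseteq> set ps" using assms(6) unfolding dominating_set_def by auto
  have fin: "finite S" using SP finite_subset by blast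
  define A where "A = (\<lambda>x. {x}) ` set ps"
  define \<phi> where "\<phi> = (\<lambda>\<alpha>. ctr ps S (SOME x. x \<in> \<alpha>))"
  have phi1: "\<phi> {x} = ctr ps S x" for x unfolding \<phi>_def by simp
  have G: "center_group A \<phi> p = {x \<in> set ps. ctr ps S x = p}" for p
    unfolding center_group_def A_def
  proof (intro set_eqI iffI)
    fix y assume "y \<in> \<Union>{\<alpha> \<in> (\<lambda>x. {x}) ` set ps. \<phi> \<alpha> = p}"
    then obtain \<alpha> where a: "\<alpha> \<in> (\<lambda>x. {x}) ` set ps" "\<phi> \<alpha> = p" "y \<in> \<alpha>" by blast
    then obtain x where x: "x \<in> set ps" "\<alpha> = {x}" by blast
    have "y = x" using a(3) x(2) by blast
    moreover have "ctr ps S x = p" using a(2) unfolding x(2) phi1 .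
    ultimately show "y \<in> {x \<in> set ps. ctr ps S x = p}" using x(1) by blast
  next
    fix y assume y: "y \<in> {x \<in> set ps. ctr ps S x = p}"
    have y1: "{y} \<in> (\<lambda>x. {x}) ` set ps" using y by blast
    have y2: "\<phi> {y} = p" unfolding phi1 using y by blast
    have "{y} \<in> {\<alpha> \<in> (\<lambda>x. {x}) ` set ps. \<phi> \<alpha> = p}" using y1 y2 by blast
    then show "y \<in> \<Union>{\<alpha> \<in> (\<lambda>x. {x}) ` set ps. \<phi> \<alpha> = p}" by blast
  qed
  have part: "is_partition ps A"
    unfolding is_partition_def A_def
  proof (intro conjI ballI impI)
    fix \<alpha> assume "\<alpha> \<in> (\<lambda>x. {x}) ` set ps"
    then obtain x where x: "x \<in> set ps" "\<alpha> = {x}" by auto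
    then obtain i where i: "i < length ps" "ps ! i = x" by (metis in_set_conv_nth)
    have c0: "{ps ! ((i + t) mod length ps) | t. t < (1::nat)} = {ps ! ((i + 0) mod length ps)}"
      by blast
    have "(i + 0) mod length ps = i" using i(1) by simp
    then have "cyc_sublist ps i 1 = {x}" unfolding cyc_sublist_def c0 using i(2) by simp
    then have "\<alpha> = cyc_sublist ps i 1" using x(2) by simp
    moreover have "1 \<le> length ps" using i(1) by simp
    ultimately show "is_sublist ps \<alpha>" unfolding is_sublist_def using i(1) by blast
    show "\<alpha> \<noteq> {}" using x by auto
  qed auto
  have asg: "is_assignment A S \<phi>"
    unfolding is_assignment_def A_def
  proof
    fix \<alpha> assume "\<alpha> \<in> (\<lambda>x. {x}) ` set ps"
    then obtain x where x: "x \<in> set ps" "\<alpha> = {x}" by auto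
    have inS: "ctr ps S x \<in> S" using ctr_prop[OF fin False] by blast
    have dx: "x \<in> S \<or> (\<exists>s\<in>S. x \<noteq> s \<and> dist x s \<le> 1)"
      using assms(6) x(1) unfolding dominating_set_def by blast
    obtain t where t: "t \<in> S" "dist x t \<le> 1"
    proof (cases "x \<in> S")
      case True then show ?thesis using that[of x] by simp
    next
      case False then show ?thesis using dx that by blast
    qed
    have "dist x (ctr ps S x) \<le> 1" using ctr_le[OF fin False t(1), of x ps] t(2) by simp
    then show "\<phi> \<alpha> \<in> S \<and> \<alpha> \<subseteq> unit_disk (\<phi> \<alpha>)"
      using x inS by (auto simp: phi1 unit_disk_def dist_commute)
  qed
  have sep: "line_sep (center_group A \<phi> p) (center_group A \<phi> q)"
    if pq: "p \<in> S" "q \<in> S" "rk ps p < rk ps q" for p q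
  proof -
    have pq': "p \<noteq> q" using pq by auto
    show ?thesis unfolding line_sep_def G
    proof (intro exI[of _ "q - p"] exI[of _ "(q \<bullet> q - p \<bullet> p) / 2"] conjI ballI)
      show "q - p \<noteq> 0" using pq' by simp
    next
      fix x assume "x \<in> {x \<in> set ps. ctr ps S x = p}"
      then have "dist x p \<le> dist x q" using ctr_le[OF fin False pq(2), of x ps] by auto
      then show "(q - p) \<bullet> x \<le> (q \<bullet> q - p \<bullet> p) / 2" using dist_le_iff by blast
    next
      fix x assume "x \<in> {x \<in> set ps. ctr ps S x = q}"
      then have "dist x q < dist x p" using ctr_lt[OF fin False pq(1), of ps x] pq(3) by auto
      then have "\<not> dist x p \<le> dist x q" by simp
      then show "(q - p) \<bullet> x > (q \<bullet> q - p \<bullet> p) / 2" using dist_le_iff[of x p q] by simp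
    qed
  qed
  have ls: "line_separable A S \<phi>"
    unfolding line_separable_def
  proof (intro ballI impI)
    fix p q assume "p \<in> S" "q \<in> S" "p \<noteq> q"
    then have "rk ps p \<noteq> rk ps q" using rk_inj[of p ps q] SP by blast
    then show "line_sep (center_group A \<phi> p) (center_group A \<phi> q) \<or>
               line_sep (center_group A \<phi> q) (center_group A \<phi> p)"
      using sep[of p q] sep[of q p] \<open>p \<in> S\<close> \<open>q \<in> S\<close> by (cases "rk ps p < rk ps q") auto
  qed
  have "\<forall>p\<in>S. p \<in> center_group A \<phi> p"
    using ctr_self[OF fin False] SP by (auto simp: G)
  then show ?thesis using part asg ls by blast
qed

end
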